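(* Let $\rho$ be an $m$-qubit density matrix, and let $\eta,\varepsilon\in\mathbb R$ and $b>0$ satisfy $\eta-\varepsilon-\frac1b>0$. Let $\mathcal C$ be a finite set of $m$-qubit pure product states such that (1) $\langle\pi|\rho|\pi\rangle\ge\eta-\varepsilon$ for all $|\pi\rangle\in\mathcal C$, and (2) $d_{\tan}(|\pi\rangle,|\pi'\rangle)\ge b$ for all distinct $|\pi\rangle,|\pi'\rangle\in\mathcal C$. Then $|\mathcal C|\le\frac{1}{\eta-\varepsilon-\frac1b}$.
   Context: For pure product states $|\pi\rangle=\bigotimes_{i=1}^m|\pi_i\rangle$ and $|\pi'\rangle=\bigotimes_{i=1}^m|\pi'_i\rangle$ (each $|\pi_i\rangle,|\pi'_i\rangle\in\mathbb{C}^2$ a unit vector), the tangent distance is $d_{\tan}(|\pi\rangle,|\pi'\rangle)=\Big(\sum_{i=1}^m\frac{1-|\langle\pi_i|\pi'_i\rangle|^2}{|\langle\pi_i|\pi'_i\rangle|^2}\Big)^{1/2}$ (a summand is $+\infty$ if $\langle\pi_i|\pi'_i\rangle=0$); equivalently, for $|\pi_{\vec z}\rangle=\bigotimes_i\frac{|0\rangle+z_i|1\rangle}{\sqrt{1+|z_i|^2}}$ it equals $\big(\sum_i|\frac{z_i-a_i}{1+z_i^*a_i}|^2\big)^{1/2}$. Distinct states are distinct up to global phase. *)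

theory Defs
  imports "HOL-Analysis.Analysis"
begin

definition density_matrix :: "nat \<Rightarrow> (nat \<Rightarrow> nat \<Rightarrow> complex) \<Rightarrow> bool" where
  "density_matrix m \<rho> \<longleftrightarrow>
     (\<forall>x<2^m. \<forall>y<2^m. \<rho> y x = cnj (\<rho> x y)) \<and>
     (\<forall>v :: nat \<Rightarrow> complex.
        0 \<le> Re (\<Sum>x<2^m. \<Sum>y<2^m. cnj (v x) * \<rho> x y * v y)) \<and>
     (\<Sum>x<2^m. \<rho> x x) = 1"

definition qubit_unit :: "complex \<times> complex \<Rightarrow> bool" where
  "qubit_unit p \<longleftrightarrow> (cmod (fst p))^2 + (cmod (snd p))^2 = 1"

definition product_state :: "nat \<Rightarrow> (complex \<times> complex) list \<Rightarrow> bool" where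
  "product_state m \<pi> \<longleftrightarrow> length \<pi> = m \<and> (\<forall>p\<in>set \<pi>. qubit_unit p)"

definition qinner :: "complex \<times> complex \<Rightarrow> complex \<times> complex \<Rightarrow> complex" where
  "qinner p q = cnj (fst p) * fst q + cnj (snd p) * snd q"

(* amplitude of the tensor product state at the basis index x in {0..<2^m};
   bit i of x selects the |0> or |1> component of the i-th factor *)
definition prod_amp :: "(complex \<times> complex) list \<Rightarrow> nat \<Rightarrow> complex" where
  "prod_amp \<pi> x = (\<Prod>i<length \<pi>. if odd (x div 2^i) then snd (\<pi> ! i) else fst (\<pi> ! i))"

definition expval :: "nat \<Rightarrow> (nat \<Rightarrow> nat \<Rightarrow> complex) \<Rightarrow> (complex \<times> complex) list \<Rightarrow> complex" where
  "expval m \<rho> \<pi> = (\<Sum>x<2^m. \<Sum>y<2^m. cnj (prod_amp \<pi> x) * \<rho> x y * prod_amp \<pi> y)"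

definition d_tan :: "(complex \<times> complex) list \<Rightarrow> (complex \<times> complex) list \<Rightarrow> ereal" where
  "d_tan \<pi> \<pi>' =
     (if \<exists>i<length \<pi>. qinner (\<pi> ! i) (\<pi>' ! i) = 0 then \<infinity>
      else ereal (sqrt (\<Sum>i<length \<pi>.
              (1 - (cmod (qinner (\<pi> ! i) (\<pi>' ! i)))^2) / (cmod (qinner (\<pi> ! i) (\<pi>' ! i)))^2)))"

end

theory Submission
  imports Defs
begin


definition qform :: "nat \<Rightarrow> (nat \<Rightarrow> nat \<Rightarrow> complex) \<Rightarrow> (nat \<Rightarrow> complex) \<Rightarrow> complex" where
  "qform N A v = (\<Sum>x<N. \<Sum>y<N. cnj (v x) * A x y * v y)"

definition psd :: "nat \<Rightarrow> (nat \<Rightarrow> nat \<Rightarrow> complex) \<Rightarrow> bool" where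
  "psd N A \<longleftrightarrow> (\<forall>v. 0 \<le> Re (qform N A v))"

definition herm :: "nat \<Rightarrow> (nat \<Rightarrow> nat \<Rightarrow> complex) \<Rightarrow> bool" where
  "herm N A \<longleftrightarrow> (\<forall>x<N. \<forall>y<N. A y x = cnj (A x y))"

definition trp :: "nat \<Rightarrow> (nat \<Rightarrow> nat \<Rightarrow> complex) \<Rightarrow> (nat \<Rightarrow> nat \<Rightarrow> complex) \<Rightarrow> complex" where
  "trp N A Q = (\<Sum>x<N. \<Sum>y<N. A x y * Q y x)"

lemma sum_delta_r: assumes "n < (N::nat)" shows "(\<Sum>y<N. f y * (if y = n then c else 0)) = f n * (c::complex)"
proof -
  have "(\<Sum>y<N. f y * (if y = n then c else 0)) = (\<Sum>y<N. if y = n then f n * c else 0)"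
    by (intro sum.cong) auto
  then show ?thesis using assms by (subst (asm) sum.delta) auto
qed

lemma qform_shift:
  assumes "n < N"
  shows "qform N A (\<lambda>x. v x + t * (if x = n then 1 else 0)) =
     qform N A v + t * (\<Sum>x<N. cnj (v x) * A x n) + cnj t * (\<Sum>y<N. A n y * v y) + cnj t * t * A n n"
proof -
  have c: "\<And>x. cnj (v x + t * (if x = n then 1 else 0)) = cnj (v x) + (if x = n then cnj t else 0)"
    by simp
  have "qform N A (\<lambda>x. v x + t * (if x = n then 1 else 0)) =
     (\<Sum>x<N. \<Sum>y<N. cnj (v x) * A x y * v y + (cnj (v x) * A x y) * (if y = n then t else 0)
        + (A x y * v y) * (if x = n then cnj t else 0) + (A x y * (if y = n then t else 0)) * (if x = n then cnj t else 0))"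
    unfolding qform_def c by (intro sum.cong refl) (auto simp: algebra_simps)
  also have "\<dots> = qform N A v + (\<Sum>x<N. cnj (v x) * A x n * t) + (\<Sum>y<N. A n y * v y) * cnj t
        + A n n * t * cnj t"
    using assms by (simp add: sum.distrib sum_delta_r qform_def sum_distrib_right[symmetric] )
  finally show ?thesis by (simp add: sum_distrib_left sum_distrib_right algebra_simps)
qed

lemma qform_delta:
  assumes "n < N"
  shows "qform N A (\<lambda>x. if x = n then 1 else 0) = A n n"
proof -
  have c: "\<And>x. cnj (if x = n then 1 else 0) = (if x = n then 1 else (0::complex))" by simp
  show ?thesis using assms unfolding qform_def c
    by (simp add: sum_delta_r mult.commute[of "if _ then _ else _"])
qed


lemma psd_restrict:
  assumes "psd (Suc n) A" shows "psd n A"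
  unfolding psd_def
proof
  fix v
  define v' where "v' y = (if y < n then v y else (0::complex))" for y
  have "qform (Suc n) A v' = qform n A v"
  proof -
    have "qform (Suc n) A v' = (\<Sum>x<n. \<Sum>y<Suc n. cnj (v' x) * A x y * v' y)"
      unfolding qform_def by (simp add: v'_def)
    also have "\<dots> = (\<Sum>x<n. \<Sum>y<n. cnj (v' x) * A x y * v' y)"
      by (simp add: v'_def)
    also have "\<dots> = qform n A v"
      unfolding qform_def by (intro sum.cong refl) (simp add: v'_def)
    finally show ?thesis .
  qed
  then show "0 \<le> Re (qform n A v)" using assms unfolding psd_def by metis
qed

lemma trp_zero_row:
  assumes "\<forall>x<Suc n. A x n = 0 \<and> A n x = 0"
  shows "trp (Suc n) A Q = trp n A Q"
  using assms unfolding trp_def by simp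

lemma herm_restrict: "herm (Suc n) A \<Longrightarrow> herm n A"
  unfolding herm_def by (meson less_SucI)

lemma qform_delta_row:
  fixes A :: "nat \<Rightarrow> nat \<Rightarrow> complex"
  assumes "x < (N::nat)"
  shows "(\<Sum>y<N. A n y * (if y = x then 1 else 0)) = A n x"
  using sum_delta_r[OF assms, of "A n" 1] by simp

lemma psd_trace:
  assumes "herm N A" "psd N A" "psd N Q"
  shows "0 \<le> Re (trp N A Q)"
  using assms
proof (induction N arbitrary: A Q)
  case 0
  then show ?case by (simp add: trp_def)
next
  case (Suc n)
  have hA: "\<And>x y. x < Suc n \<Longrightarrow> y < Suc n \<Longrightarrow> A y x = cnj (A x y)"
    using Suc.prems(1) unfolding herm_def by blast
  have pA: "\<And>v. 0 \<le> Re (qform (Suc n) A v)" using Suc.prems(2) unfolding psd_def by blast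
  have pQ: "\<And>v. 0 \<le> Re (qform (Suc n) Q v)" using Suc.prems(3) unfolding psd_def by blast
  define d where "d = A n n"
  have dre: "0 \<le> Re d" using pA[of "\<lambda>x. if x = n then 1 else 0"] qform_delta[of n "Suc n" A]
    by (simp add: d_def)
  have "Im (A n n) = Im (cnj (A n n))" using hA[OF lessI lessI] by (rule arg_cong)
  then have dim: "Im d = 0" unfolding d_def cnj.sel by linarith
  have dreal: "d = complex_of_real (Re d)" using dim by (simp add: complex_eq_iff)
  define A' where "A' = (if d = 0 then A else (\<lambda>x y. A x y - A x n * A n y / d))"
  have conjsum: "(\<Sum>x<Suc n. cnj (v x) * A x n) = cnj (\<Sum>y<Suc n. A n y * v y)" for v
  proof -
    have "(\<Sum>x<Suc n. cnj (v x) * A x n) = (\<Sum>x<Suc n. cnj (A n x * v x))"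
    proof (intro sum.cong refl)
      fix x assume "x \<in> {..<Suc n}"
      then have "A x n = cnj (A n x)" using hA[of n x] by simp
      then show "cnj (v x) * A x n = cnj (A n x * v x)" by (simp add: mult.commute)
    qed
    then show ?thesis by (simp add: cnj_sum)
  qed
  have zero: "\<forall>x<Suc n. A' x n = 0 \<and> A' n x = 0"
  proof (cases "d = 0")
    case True
    have "A n x = 0" if x: "x < Suc n" for x
    proof (rule ccontr)
      assume nz: "A n x \<noteq> 0"
      define \<beta> where "\<beta> = A n x"
      define k where "k = (Re (A x x) + 1) / (2 * (cmod \<beta>)^2)"
      define t where "t = - complex_of_real k * \<beta>"
      let ?e = "\<lambda>y. if y = x then 1 else (0::complex)"
      have "0 \<le> Re (qform (Suc n) A (\<lambda>y. ?e y + t * (if y = n then 1 else 0)))" by (rule pA)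
      also have "qform (Suc n) A (\<lambda>y. ?e y + t * (if y = n then 1 else 0)) =
          A x x + t * cnj \<beta> + cnj t * \<beta>"
        unfolding qform_shift[OF lessI] conjsum qform_delta[OF x] qform_delta_row[OF x]
        using True by (simp add: d_def \<beta>_def)
      also have "Re (A x x + t * cnj \<beta> + cnj t * \<beta>) = Re (A x x) - 2 * k * (cmod \<beta>)^2"
      proof -
        have bb: "cnj \<beta> * \<beta> = complex_of_real ((cmod \<beta>)^2)" by (simp add: complex_norm_square mult.commute del: of_real_power)
        have "t * cnj \<beta> + cnj t * \<beta> = - 2 * complex_of_real k * (cnj \<beta> * \<beta>)"
          unfolding t_def by (simp add: algebra_simps)
        also have "\<dots> = complex_of_real (- 2 * k * (cmod \<beta>)^2)" unfolding bb by simp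
        finally have "Re (t * cnj \<beta> + cnj t * \<beta>) = - 2 * k * (cmod \<beta>)^2"
          by (metis Re_complex_of_real)
        then show ?thesis by (simp only: plus_complex.sel add.assoc)
      qed
      also have "\<dots> = -1" using nz unfolding k_def \<beta>_def by (simp add: field_simps)
      finally show False by simp
    qed
    moreover have "A x n = 0" if x: "x < Suc n" for x
      using hA[of n x] x \<open>\<And>x. x < Suc n \<Longrightarrow> A n x = 0\<close>[OF x] by simp
    ultimately show ?thesis using True unfolding A'_def by auto
  next
    case False
    then show ?thesis unfolding A'_def d_def by auto
  qed
  have hA': "herm (Suc n) A'"
    unfolding herm_def A'_def
  proof (intro allI impI)
    fix x y assume xy: "x < Suc n" "y < Suc n"
    have "cnj d = d" using dreal by (metis complex_cnj_complex_of_real)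
    moreover have "A y x = cnj (A x y)" "A y n = cnj (A n y)" "A n x = cnj (A x n)"
      using hA[of y x] hA[of n y] hA[of x n] xy by auto
    ultimately show "(if d = 0 then A else (\<lambda>x y. A x y - A x n * A n y / d)) y x =
        cnj ((if d = 0 then A else (\<lambda>x y. A x y - A x n * A n y / d)) x y)"
      by (simp add: mult.commute)
  qed
  have pA': "psd (Suc n) A'"
  proof (cases "d = 0")
    case True then show ?thesis using Suc.prems(2) by (simp add: A'_def)
  next
    case False
    show ?thesis unfolding psd_def
    proof
      fix v
      define \<beta> where "\<beta> = (\<Sum>y<Suc n. A n y * v y)"
      define t where "t = - \<beta> / d"
      have "qform (Suc n) A' v = qform (Suc n) A v - (\<Sum>x<Suc n. cnj (v x) * A x n) * \<beta> / d"
      proof -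
        have "qform (Suc n) A' v = (\<Sum>x<Suc n. \<Sum>y<Suc n. cnj (v x) * A x y * v y - (cnj (v x) * A x n) * (A n y * v y) / d)"
          unfolding A'_def qform_def using False by (simp add: algebra_simps diff_divide_distrib)
        also have "\<dots> = qform (Suc n) A v - (\<Sum>x<Suc n. \<Sum>y<Suc n. (cnj (v x) * A x n) * (A n y * v y)) / d"
          by (simp only: sum_subtractf sum_divide_distrib qform_def)
        also have "(\<Sum>x<Suc n. \<Sum>y<Suc n. (cnj (v x) * A x n) * (A n y * v y)) = (\<Sum>x<Suc n. cnj (v x) * A x n) * \<beta>"
          unfolding \<beta>_def by (simp only: sum_product)
        finally show ?thesis by simp
      qed
      also have "\<dots> = qform (Suc n) A v - cnj \<beta> * \<beta> / d" unfolding conjsum \<beta>_def ..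
      also have "\<dots> = qform (Suc n) A (\<lambda>x. v x + t * (if x = n then 1 else 0))"
        unfolding qform_shift[OF lessI] conjsum \<beta>_def[symmetric] d_def[symmetric] t_def
        using False dreal by (simp add: field_simps)
      finally show "0 \<le> Re (qform (Suc n) A' v)" using pA by simp
    qed
  qed
  have le: "Re (trp (Suc n) A' Q) \<le> Re (trp (Suc n) A Q)"
  proof (cases "d = 0")
    case True then show ?thesis by (simp add: A'_def)
  next
    case False
    define w where "w x = A x n" for x
    have "trp (Suc n) A Q - trp (Suc n) A' Q = (\<Sum>x<Suc n. \<Sum>y<Suc n. A x n * A n y / d * Q y x)"
      unfolding trp_def sum_subtractf[symmetric] A'_def using False
      by (intro sum.cong refl) (simp add: algebra_simps)
    also have "\<dots> = (\<Sum>a<Suc n. \<Sum>b<Suc n. A n a * Q a b * A b n) / d"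
      unfolding sum_divide_distrib
      by (subst sum.swap) (intro sum.cong refl, simp add: algebra_simps)
    also have "(\<Sum>a<Suc n. \<Sum>b<Suc n. A n a * Q a b * A b n) = qform (Suc n) Q w"
      unfolding qform_def w_def
    proof (intro sum.cong refl)
      fix a b assume "a \<in> {..<Suc n}"
      then have "A n a = cnj (A a n)" using hA[of a n] by simp
      then show "A n a * Q a b * A b n = cnj (A a n) * Q a b * A b n" by simp
    qed
    finally have eq: "trp (Suc n) A Q - trp (Suc n) A' Q = qform (Suc n) Q w / d" .
    have "Re d > 0" using False dre dreal by (metis less_eq_real_def of_real_0)
    then have "0 \<le> Re (qform (Suc n) Q w / d)"
      using pQ[of w] by (subst dreal) (simp add: Re_divide_of_real)
    then show ?thesis using arg_cong[OF eq, of Re] by simp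
  qed
  have "0 \<le> Re (trp n A' Q)"
    by (rule Suc.IH) (use hA' pA' Suc.prems(3) in \<open>auto intro: herm_restrict psd_restrict\<close>)
  then show ?case using le trp_zero_row[OF zero, of Q] by simp
qed



lemma prod_amp_Cons:
  "prod_amp (p # \<pi>) x = (if odd x then snd p else fst p) * prod_amp \<pi> (x div 2)"
proof -
  have "(\<Prod>i<length \<pi>. if odd (x div 2 ^ Suc i) then snd ((p # \<pi>) ! Suc i) else fst ((p # \<pi>) ! Suc i))
      = (\<Prod>i<length \<pi>. if odd (x div 2 div 2 ^ i) then snd (\<pi> ! i) else fst (\<pi> ! i))"
    by (intro prod.cong refl) (simp add: div_mult2_eq)
  then show ?thesis unfolding prod_amp_def length_Cons prod.lessThan_Suc_shift by simp
qed

lemma sum_double: "(\<Sum>x<2*M. f x) = (\<Sum>x<M. f (2*x) + f (2*x+1::nat))"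
  by (induction M) (simp_all add: sum.distrib ac_simps)

lemma amp_inner:
  "length \<pi>' = length \<pi> \<Longrightarrow>
   (\<Sum>x<2^length \<pi>. cnj (prod_amp \<pi> x) * prod_amp \<pi>' x) = (\<Prod>i<length \<pi>. qinner (\<pi>!i) (\<pi>'!i))"
proof (induction \<pi> arbitrary: \<pi>')
  case Nil
  then show ?case by (simp add: prod_amp_def)
next
  case (Cons p \<pi>)
  then obtain q \<rho> where q: "\<pi>' = q # \<rho>" "length \<rho> = length \<pi>"
    by (cases \<pi>') auto
  have "(\<Sum>x<2^length (p#\<pi>). cnj (prod_amp (p#\<pi>) x) * prod_amp \<pi>' x)
      = (\<Sum>x<2^length \<pi>. qinner p q * (cnj (prod_amp \<pi> x) * prod_amp \<rho> x))"
    unfolding q(1) by (simp add: sum_double prod_amp_Cons qinner_def algebra_simps)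
  also have "\<dots> = qinner p q * (\<Prod>i<length \<pi>. qinner (\<pi>!i) (\<rho>!i))"
    by (simp add: sum_distrib_left[symmetric] Cons.IH q(2))
  also have "\<dots> = (\<Prod>i<length (p#\<pi>). qinner ((p#\<pi>)!i) (\<pi>'!i))"
    unfolding q(1) length_Cons prod.lessThan_Suc_shift by simp
  finally show ?case .
qed

lemma qinner_self: "qubit_unit p \<Longrightarrow> qinner p p = 1"
proof -
  assume "qubit_unit p"
  then have "(cmod (fst p))^2 + (cmod (snd p))^2 = 1" by (simp add: qubit_unit_def)
  then have "complex_of_real ((cmod (fst p))^2 + (cmod (snd p))^2) = 1" by simp
  then show ?thesis unfolding qinner_def
    by (simp add: complex_norm_square mult.commute del: of_real_power)
qed

lemma qinner_le1: assumes "qubit_unit p" "qubit_unit q" shows "cmod (qinner p q) \<le> 1"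
proof -
  have "cmod (qinner p q) \<le> cmod (fst p) * cmod (fst q) + cmod (snd p) * cmod (snd q)"
    unfolding qinner_def by (rule order_trans[OF norm_triangle_ineq]) (simp add: norm_mult)
  also have "\<dots> \<le> ((cmod (fst p))^2 + (cmod (fst q))^2)/2 + ((cmod (snd p))^2 + (cmod (snd q))^2)/2"
  proof -
    have h: "a * c \<le> (a^2 + c^2)/2" for a c :: real
    proof -
      have "0 \<le> (a - c)^2" by simp
      then show ?thesis by (simp add: power2_diff)
    qed
    show ?thesis by (intro add_mono h)
  qed
  also have "\<dots> = 1" using assms unfolding qubit_unit_def by (simp add: add_divide_distrib)
  finally show ?thesis .
qed

lemma prod_one_plus:
  assumes "finite I" "\<forall>i\<in>I. 0 \<le> u i"
  shows "1 + sum u I \<le> (\<Prod>i\<in>I. 1 + u i :: real)"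
  using assms
proof (induction I rule: finite_induct)
  case empty then show ?case by simp
next
  case (insert a I)
  have ua: "0 \<le> u a" using insert by simp
  have IH: "1 + sum u I \<le> (\<Prod>i\<in>I. 1 + u i)" using insert by simp
  have s: "0 \<le> sum u I" using insert by (simp add: sum_nonneg)
  have "1 + sum u (insert a I) = 1 + u a + sum u I" using insert by simp
  also have "\<dots> \<le> (1 + u a) * (1 + sum u I)" using ua s by (simp add: algebra_simps)
  also have "\<dots> \<le> (1 + u a) * (\<Prod>i\<in>I. 1 + u i)" using IH ua by (simp add: mult_left_mono)
  finally show ?case using insert by simp
qed



lemma dist_bound:
  fixes \<pi> \<pi>' :: "(complex \<times> complex) list" and b :: real
  assumes u: "\<forall>p\<in>set \<pi>. qubit_unit p" "\<forall>p\<in>set \<pi>'. qubit_unit p"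
    and len: "length \<pi>' = length \<pi>" and b: "b > 0" and d: "d_tan \<pi> \<pi>' \<ge> ereal b"
  shows "cmod (\<Prod>i<length \<pi>. qinner (\<pi>!i) (\<pi>'!i)) \<le> 1 / b"
proof -
  define n where "n = length \<pi>"
  define q where "q i = qinner (\<pi>!i) (\<pi>'!i)" for i
  define c where "c i = cmod (q i)" for i
  have c1: "c i \<le> 1" if "i < n" for i
    unfolding c_def q_def using u that len n_def by (intro qinner_le1) auto
  have c0: "0 \<le> c i" for i unfolding c_def by simp
  have P: "cmod (\<Prod>i<n. q i) = (\<Prod>i<n. c i)" unfolding c_def by (simp add: prod_norm)
  show ?thesis
  proof (cases "\<exists>i<n. q i = 0")
    case True
    then obtain i where "i < n" "q i = 0" by blast
    then have "(\<Prod>i<n. q i) = 0" by (intro prod_zero) auto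
    then have "cmod (\<Prod>i<n. q i) = 0" by (simp only: norm_zero)
    moreover have "0 \<le> 1 / b" using b by simp
    ultimately have "cmod (\<Prod>i<n. q i) \<le> 1 / b" by linarith
    then show ?thesis unfolding n_def q_def .
  next
    case False
    then have cpos: "c i > 0" if "i < n" for i using that unfolding c_def by auto
    define u where "u i = (1 - (c i)^2) / (c i)^2" for i
    define U where "U = (\<Sum>i<n. u i)"
    have "d_tan \<pi> \<pi>' = ereal (sqrt U)"
      using False unfolding d_tan_def U_def u_def c_def q_def n_def by auto
    then have "b \<le> sqrt U" using d by simp
    have u0: "0 \<le> u i" if "i < n" for i
      unfolding u_def using c1[OF that] c0[of i] by (simp add: power_le_one)
    then have U0: "0 \<le> U" unfolding U_def by (intro sum_nonneg) auto
    have "b^2 \<le> (sqrt U)^2" using \<open>b \<le> sqrt U\<close> b by (intro power_mono) auto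
    then have bU: "b^2 \<le> U" using U0 by simp
    have "1 + U \<le> (\<Prod>i<n. 1 + u i)" unfolding U_def by (rule prod_one_plus) (use u0 in auto)
    also have "(\<Prod>i<n. 1 + u i) = (\<Prod>i<n. 1 / (c i)^2)"
    proof (intro prod.cong refl)
      fix i assume "i \<in> {..<n}"
      then have "c i > 0" using cpos by simp
      then have "(c i)^2 \<noteq> 0" by simp
      then show "1 + u i = 1 / (c i)^2" unfolding u_def by (simp add: field_simps)
    qed
    also have "\<dots> = 1 / (\<Prod>i<n. c i)^2" by (simp add: prod_dividef prod_power_distrib)
    finally have h: "1 + U \<le> 1 / (\<Prod>i<n. c i)^2" .
    have Ppos: "0 < (\<Prod>i<n. c i)" using cpos by (intro prod_pos) auto
    have "(\<Prod>i<n. c i)^2 \<le> 1 / (1 + U)"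
    proof -
      have p2: "0 < (\<Prod>i<n. c i)^2" using Ppos by (intro zero_less_power)
      have "(1 + U) * (\<Prod>i<n. c i)^2 \<le> 1" using h p2 by (simp add: le_divide_eq)
      then show ?thesis using U0 by (simp add: le_divide_eq mult.commute)
    qed
    also have "\<dots> \<le> (1 / b)^2"
    proof -
      have "b^2 \<le> 1 + U" using bU by linarith
      moreover have "0 < (1 + U) * b^2" using b U0 by simp
      ultimately have "1 / (1 + U) \<le> 1 / b^2" by (intro divide_left_mono) auto
      then show ?thesis by (simp add: power_one_over)
    qed
    finally have sq: "(\<Prod>i<n. c i)^2 \<le> (1 / b)^2" .
    have "0 \<le> 1 / b" using b by simp
    then have "(\<Prod>i<n. c i) \<le> 1 / b" by (rule power2_le_imp_le[OF sq])
    then have "cmod (\<Prod>i<n. q i) \<le> 1 / b" using P by simp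
    then show ?thesis unfolding n_def q_def .
  qed
qed



lemma cnj_mult_self: "cnj z * z = complex_of_real ((cmod z)^2)"
  by (simp add: complex_norm_square mult.commute del: of_real_power)

lemma amgm: "0 < L \<Longrightarrow> (x::real) * y \<le> x^2 / (2*L) + L * y^2 / 2"
proof -
  assume L: "0 < L"
  have "0 \<le> (x - L * y)^2" by simp
  then have "2 * L * (x * y) \<le> x^2 + L^2 * y^2" by (simp add: power2_diff power_mult_distrib algebra_simps)
  then show ?thesis using L by (simp add: field_simps power2_eq_square)
qed

lemma schur:
  fixes C :: "'a set" and a :: "'a \<Rightarrow> nat \<Rightarrow> complex" and v :: "nat \<Rightarrow> complex" and b :: real
  assumes fin: "finite C" and b: "b > 0"
    and diag: "\<forall>\<pi>\<in>C. (\<Sum>x<M. cnj (a \<pi> x) * a \<pi> x) = 1"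
    and off: "\<forall>\<pi>\<in>C. \<forall>\<pi>'\<in>C. \<pi> \<noteq> \<pi>' \<longrightarrow> cmod (\<Sum>x<M. cnj (a \<pi> x) * a \<pi>' x) \<le> 1 / b"
  shows "(\<Sum>\<pi>\<in>C. (cmod (\<Sum>y<M. cnj (a \<pi> y) * v y))^2) \<le> (1 + card C / b) * (\<Sum>x<M. (cmod (v x))^2)"
proof -
  define s where "s \<pi> = (\<Sum>y<M. cnj (a \<pi> y) * v y)" for \<pi>
  define S where "S = (\<Sum>\<pi>\<in>C. (cmod (s \<pi>))^2)"
  define V where "V = (\<Sum>x<M. (cmod (v x))^2)"
  define L where "L = 1 + card C / b"
  define w where "w y = (\<Sum>\<pi>\<in>C. s \<pi> * a \<pi> y)" for y
  define G where "G \<pi> \<pi>' = (\<Sum>x<M. cnj (a \<pi> x) * a \<pi>' x)" for \<pi> \<pi>'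
  define W where "W = (\<Sum>y<M. (cmod (w y))^2)"
  have L0: "0 < L" unfolding L_def using b by (simp add: add_pos_nonneg)
  have S0: "0 \<le> S" unfolding S_def by (intro sum_nonneg) simp
  have cw: "cnj (w y) = (\<Sum>\<pi>\<in>C. cnj (s \<pi>) * cnj (a \<pi> y))" for y
    unfolding w_def by (simp add: cnj_sum)
  have i: "complex_of_real S = (\<Sum>y<M. cnj (w y) * v y)"
  proof -
    have "complex_of_real S = (\<Sum>\<pi>\<in>C. cnj (s \<pi>) * s \<pi>)"
      unfolding S_def cnj_mult_self by simp
    also have "\<dots> = (\<Sum>\<pi>\<in>C. \<Sum>y<M. cnj (s \<pi>) * cnj (a \<pi> y) * v y)"
      unfolding s_def by (simp add: sum_distrib_left mult.assoc)
    also have "\<dots> = (\<Sum>y<M. \<Sum>\<pi>\<in>C. cnj (s \<pi>) * cnj (a \<pi> y) * v y)"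
      by (rule sum.swap)
    also have "\<dots> = (\<Sum>y<M. cnj (w y) * v y)"
      unfolding cw by (simp add: sum_distrib_right)
    finally show ?thesis .
  qed
  have ii: "(\<Sum>y<M. cnj (w y) * w y) = (\<Sum>\<pi>\<in>C. \<Sum>\<pi>'\<in>C. cnj (s \<pi>) * s \<pi>' * G \<pi> \<pi>')"
  proof -
    have "(\<Sum>y<M. cnj (w y) * w y) = (\<Sum>y<M. \<Sum>\<pi>\<in>C. \<Sum>\<pi>'\<in>C. cnj (s \<pi>) * s \<pi>' * (cnj (a \<pi> y) * a \<pi>' y))"
      unfolding cw unfolding w_def by (intro sum.cong refl) (simp only: sum_product, simp add: algebra_simps)
    also have "\<dots> = (\<Sum>\<pi>\<in>C. \<Sum>y<M. \<Sum>\<pi>'\<in>C. cnj (s \<pi>) * s \<pi>' * (cnj (a \<pi> y) * a \<pi>' y))"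
      by (rule sum.swap)
    also have "\<dots> = (\<Sum>\<pi>\<in>C. \<Sum>\<pi>'\<in>C. \<Sum>y<M. cnj (s \<pi>) * s \<pi>' * (cnj (a \<pi> y) * a \<pi>' y))"
      by (intro sum.cong refl) (rule sum.swap)
    also have "\<dots> = (\<Sum>\<pi>\<in>C. \<Sum>\<pi>'\<in>C. cnj (s \<pi>) * s \<pi>' * G \<pi> \<pi>')"
      unfolding G_def by (simp add: sum_distrib_left)
    finally show ?thesis .
  qed
  have iii: "W \<le> L * S"
  proof -
    have "complex_of_real W = (\<Sum>y<M. cnj (w y) * w y)"
      unfolding W_def cnj_mult_self by simp
    then have "W = Re (\<Sum>\<pi>\<in>C. \<Sum>\<pi>'\<in>C. cnj (s \<pi>) * s \<pi>' * G \<pi> \<pi>')"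
      unfolding ii by (metis Re_complex_of_real)
    also have "\<dots> \<le> cmod (\<Sum>\<pi>\<in>C. \<Sum>\<pi>'\<in>C. cnj (s \<pi>) * s \<pi>' * G \<pi> \<pi>')"
      by (rule complex_Re_le_cmod)
    also have "\<dots> \<le> (\<Sum>\<pi>\<in>C. \<Sum>\<pi>'\<in>C. cmod (cnj (s \<pi>) * s \<pi>' * G \<pi> \<pi>'))"
      by (rule order_trans[OF norm_sum sum_mono]) (rule norm_sum)
    also have "\<dots> \<le> (\<Sum>\<pi>\<in>C. \<Sum>\<pi>'\<in>C. (if \<pi> = \<pi>' then (cmod (s \<pi>))^2 else 0)
                    + ((cmod (s \<pi>))^2 + (cmod (s \<pi>'))^2) / (2 * b))"
    proof (intro sum_mono)
      fix \<pi> \<pi>' assume p: "\<pi> \<in> C" "\<pi>' \<in> C"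
      have nn: "0 \<le> ((cmod (s \<pi>))^2 + (cmod (s \<pi>'))^2) / (2 * b)" using b by simp
      have e: "cmod (cnj (s \<pi>) * s \<pi>' * G \<pi> \<pi>') = cmod (s \<pi>) * cmod (s \<pi>') * cmod (G \<pi> \<pi>')"
        by (simp add: norm_mult)
      show "cmod (cnj (s \<pi>) * s \<pi>' * G \<pi> \<pi>') \<le> (if \<pi> = \<pi>' then (cmod (s \<pi>))^2 else 0)
                    + ((cmod (s \<pi>))^2 + (cmod (s \<pi>'))^2) / (2 * b)"
      proof (cases "\<pi> = \<pi>'")
        case True
        then have "G \<pi> \<pi>' = 1" using diag p unfolding G_def by simp
        then show ?thesis using True nn unfolding e by (simp add: power2_eq_square)
      next
        case False
        then have g: "cmod (G \<pi> \<pi>') \<le> 1 / b" using off p unfolding G_def by simp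
        have "cmod (s \<pi>) * cmod (s \<pi>') * cmod (G \<pi> \<pi>') \<le> cmod (s \<pi>) * cmod (s \<pi>') * (1 / b)"
          by (intro mult_left_mono g) simp
        also have "\<dots> \<le> ((cmod (s \<pi>))^2 + (cmod (s \<pi>'))^2) / (2 * b)"
        proof -
          have "0 \<le> (cmod (s \<pi>) - cmod (s \<pi>'))^2" by simp
          then have "2 * (cmod (s \<pi>) * cmod (s \<pi>')) \<le> (cmod (s \<pi>))^2 + (cmod (s \<pi>'))^2"
            by (simp add: power2_diff)
          then show ?thesis using b by (simp add: field_simps)
        qed
        finally show ?thesis using False unfolding e by simp
      qed
    qed
    also have "\<dots> = S + (card C * S + card C * S) / (2 * b)"
    proof -
      define X where "X \<pi> = (cmod (s \<pi>))^2" for \<pi>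
      have SX: "S = sum X C" unfolding S_def X_def ..
      have d1: "(\<Sum>\<pi>\<in>C. \<Sum>\<pi>'\<in>C. (if \<pi> = \<pi>' then X \<pi> else 0)) = S"
        unfolding SX using fin by (simp add: sum.delta)
      have d2: "(\<Sum>\<pi>'\<in>C. (X \<pi> + X \<pi>') / (2 * b)) = (card C * X \<pi> + S) / (2 * b)" for \<pi>
        unfolding SX by (simp add: sum_divide_distrib[symmetric] sum.distrib)
      have d3: "(\<Sum>\<pi>\<in>C. (card C * X \<pi> + S) / (2 * b)) = (card C * S + card C * S) / (2 * b)"
        unfolding SX by (simp add: sum_divide_distrib[symmetric] sum.distrib sum_distrib_left)
      show ?thesis
        unfolding X_def[symmetric] sum.distrib d1 d2 d3 ..
    qed
    also have "\<dots> = L * S" unfolding L_def using b by (simp add: field_simps)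
    finally show ?thesis .
  qed
  have iv: "S \<le> S / 2 + L * V / 2"
  proof -
    have "S = Re (\<Sum>y<M. cnj (w y) * v y)" unfolding i[symmetric] by simp
    also have "\<dots> \<le> cmod (\<Sum>y<M. cnj (w y) * v y)" by (rule complex_Re_le_cmod)
    also have "\<dots> \<le> (\<Sum>y<M. cmod (cnj (w y) * v y))" by (rule norm_sum)
    also have "\<dots> = (\<Sum>y<M. cmod (w y) * cmod (v y))" by (simp add: norm_mult)
    also have "\<dots> \<le> (\<Sum>y<M. (cmod (w y))^2 / (2*L) + L * (cmod (v y))^2 / 2)"
      by (intro sum_mono amgm L0)
    also have "\<dots> = W / (2*L) + L * V / 2"
      unfolding W_def V_def by (simp add: sum.distrib sum_divide_distrib sum_distrib_left)
    also have "\<dots> \<le> L * S / (2*L) + L * V / 2"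
      using iii L0 by (simp add: divide_right_mono pos_divide_le_eq mult.commute)
    also have "\<dots> = S / 2 + L * V / 2" using L0 by simp
    finally show ?thesis .
  qed
  then have "S \<le> L * V" by simp
  then show ?thesis unfolding S_def s_def L_def V_def .
qed



lemma qform_diff: "qform M (\<lambda>x y. f x y - g x y) v = qform M f v - qform M g v"
  unfolding qform_def by (simp add: algebra_simps sum_subtractf)

lemma qform_id: "qform M (\<lambda>x y. c * (if x = y then 1 else 0)) v = c * (\<Sum>x<M. cnj (v x) * v x)"
proof -
  have "qform M (\<lambda>x y. c * (if x = y then 1 else 0)) v = (\<Sum>x<M. c * (cnj (v x) * v x))"
    unfolding qform_def
  proof (intro sum.cong refl)
    fix x assume x: "x \<in> {..<M}"
    have "(\<Sum>y<M. cnj (v x) * (c * (if x = y then 1 else 0)) * v y) = (\<Sum>y<M. if x = y then c * (cnj (v x) * v y) else 0)"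
      by (intro sum.cong refl) simp
    also have "\<dots> = c * (cnj (v x) * v x)" using x by (simp add: sum.delta')
    finally show "(\<Sum>y<M. cnj (v x) * (c * (if x = y then 1 else 0)) * v y) = c * (cnj (v x) * v x)" .
  qed
  then show ?thesis by (simp add: sum_distrib_left)
qed

lemma qform_proj:
  fixes a :: "'a \<Rightarrow> nat \<Rightarrow> complex"
  shows "qform M (\<lambda>x y. \<Sum>\<pi>\<in>C. a \<pi> x * cnj (a \<pi> y)) v =
    (\<Sum>\<pi>\<in>C. cnj (\<Sum>y<M. cnj (a \<pi> y) * v y) * (\<Sum>y<M. cnj (a \<pi> y) * v y))"
proof -
  have "qform M (\<lambda>x y. \<Sum>\<pi>\<in>C. a \<pi> x * cnj (a \<pi> y)) v =
      (\<Sum>x<M. \<Sum>y<M. \<Sum>\<pi>\<in>C. (cnj (v x) * a \<pi> x) * (cnj (a \<pi> y) * v y))"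
    unfolding qform_def by (simp add: sum_distrib_left sum_distrib_right algebra_simps)
  also have "\<dots> = (\<Sum>x<M. \<Sum>\<pi>\<in>C. \<Sum>y<M. (cnj (v x) * a \<pi> x) * (cnj (a \<pi> y) * v y))"
    by (intro sum.cong refl) (rule sum.swap)
  also have "\<dots> = (\<Sum>\<pi>\<in>C. \<Sum>x<M. \<Sum>y<M. (cnj (v x) * a \<pi> x) * (cnj (a \<pi> y) * v y))"
    by (rule sum.swap)
  also have "\<dots> = (\<Sum>\<pi>\<in>C. (\<Sum>x<M. cnj (v x) * a \<pi> x) * (\<Sum>y<M. cnj (a \<pi> y) * v y))"
    by (simp add: sum_product)
  also have "\<dots> = (\<Sum>\<pi>\<in>C. cnj (\<Sum>y<M. cnj (a \<pi> y) * v y) * (\<Sum>y<M. cnj (a \<pi> y) * v y))"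
    by (simp add: cnj_sum mult.commute)
  finally show ?thesis .
qed

lemma trp_diff: "trp M A (\<lambda>x y. f x y - g x y) = trp M A f - trp M A g"
  unfolding trp_def by (simp add: algebra_simps sum_subtractf)

lemma trp_id: "trp M A (\<lambda>x y. c * (if x = y then 1 else 0)) = c * (\<Sum>x<M. A x x)"
proof -
  have "trp M A (\<lambda>x y. c * (if x = y then 1 else 0)) = (\<Sum>x<M. c * A x x)"
    unfolding trp_def
  proof (intro sum.cong refl)
    fix x assume x: "x \<in> {..<M}"
    have "(\<Sum>y<M. A x y * (c * (if y = x then 1 else 0))) = (\<Sum>y<M. if y = x then c * A x y else 0)"
      by (intro sum.cong refl) simp
    also have "\<dots> = c * A x x" using x by (simp add: sum.delta)
    finally show "(\<Sum>y<M. A x y * (c * (if y = x then 1 else 0))) = c * A x x" .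
  qed
  then show ?thesis by (simp add: sum_distrib_left)
qed

lemma trp_proj:
  fixes a :: "'a \<Rightarrow> nat \<Rightarrow> complex"
  shows "trp M A (\<lambda>x y. \<Sum>\<pi>\<in>C. a \<pi> x * cnj (a \<pi> y)) =
    (\<Sum>\<pi>\<in>C. \<Sum>x<M. \<Sum>y<M. cnj (a \<pi> x) * A x y * a \<pi> y)"
proof -
  have "trp M A (\<lambda>x y. \<Sum>\<pi>\<in>C. a \<pi> x * cnj (a \<pi> y)) =
      (\<Sum>x<M. \<Sum>y<M. \<Sum>\<pi>\<in>C. cnj (a \<pi> x) * A x y * a \<pi> y)"
    unfolding trp_def by (simp add: sum_distrib_left algebra_simps)
  also have "\<dots> = (\<Sum>x<M. \<Sum>\<pi>\<in>C. \<Sum>y<M. cnj (a \<pi> x) * A x y * a \<pi> y)"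
    by (intro sum.cong refl) (rule sum.swap)
  also have "\<dots> = (\<Sum>\<pi>\<in>C. \<Sum>x<M. \<Sum>y<M. cnj (a \<pi> x) * A x y * a \<pi> y)"
    by (rule sum.swap)
  finally show ?thesis .
qed

lemma Re_sum_cnj: "Re (\<Sum>x\<in>X. cnj (f x) * f x) = (\<Sum>x\<in>X. (cmod (f x))^2)"
  unfolding cnj_mult_self by (simp add: Re_sum)

theorem claim5p3:
  fixes m :: nat and \<rho> :: "nat \<Rightarrow> nat \<Rightarrow> complex"
    and \<eta> \<epsilon> b :: real and C :: "(complex \<times> complex) list set"
  assumes "density_matrix m \<rho>"
    and "b > 0" and "\<eta> - \<epsilon> - 1 / b > 0"
    and "finite C" and "\<forall>\<pi>\<in>C. product_state m \<pi>"
    and "\<forall>\<pi>\<in>C. Re (expval m \<rho> \<pi>) \<ge> \<eta> - \<epsilon>"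
    and "\<forall>\<pi>\<in>C. \<forall>\<pi>'\<in>C. \<pi> \<noteq> \<pi>' \<longrightarrow> d_tan \<pi> \<pi>' \<ge> ereal b"
  shows "real (card C) \<le> 1 / (\<eta> - \<epsilon> - 1 / b)"
proof -
  note dm = assms(1) and b = assms(2) and pos = assms(3) and fin = assms(4)
    and ps = assms(5) and ev = assms(6) and dt = assms(7)
  define M where "M = (2::nat)^m"
  define N where "N = card C"
  define L where "L = 1 + real N / b"
  define a where "a = prod_amp"
  have len: "length \<pi> = m" and unit: "\<forall>p\<in>set \<pi>. qubit_unit p" if "\<pi> \<in> C" for \<pi>
    using ps that unfolding product_state_def by auto
  have diag: "\<forall>\<pi>\<in>C. (\<Sum>x<M. cnj (a \<pi> x) * a \<pi> x) = 1"
  proof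
    fix \<pi> assume p: "\<pi> \<in> C"
    have "(\<Sum>x<M. cnj (a \<pi> x) * a \<pi> x) = (\<Prod>i<length \<pi>. qinner (\<pi>!i) (\<pi>!i))"
      unfolding M_def a_def len[OF p, symmetric] by (rule amp_inner) simp
    also have "\<dots> = 1"
      by (intro prod.neutral ballI qinner_self) (use unit[OF p] in auto)
    finally show "(\<Sum>x<M. cnj (a \<pi> x) * a \<pi> x) = 1" .
  qed
  have off: "\<forall>\<pi>\<in>C. \<forall>\<pi>'\<in>C. \<pi> \<noteq> \<pi>' \<longrightarrow> cmod (\<Sum>x<M. cnj (a \<pi> x) * a \<pi>' x) \<le> 1 / b"
  proof (intro ballI impI)
    fix \<pi> \<pi>' assume p: "\<pi> \<in> C" "\<pi>' \<in> C" "\<pi> \<noteq> \<pi>'"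
    have "(\<Sum>x<M. cnj (a \<pi> x) * a \<pi>' x) = (\<Prod>i<length \<pi>. qinner (\<pi>!i) (\<pi>'!i))"
      unfolding M_def a_def len[OF p(1), symmetric] by (rule amp_inner) (simp add: len p)
    also have "cmod \<dots> \<le> 1 / b"
      by (rule dist_bound) (use unit p len dt b in auto)
    finally show "cmod (\<Sum>x<M. cnj (a \<pi> x) * a \<pi>' x) \<le> 1 / b" .
  qed
  define Q where "Q x y = complex_of_real L * (if x = y then 1 else 0) - (\<Sum>\<pi>\<in>C. a \<pi> x * cnj (a \<pi> y))" for x y
  have psdQ: "psd M Q"
    unfolding psd_def
  proof
    fix v
    have "qform M Q v = complex_of_real L * (\<Sum>x<M. cnj (v x) * v x)
        - (\<Sum>\<pi>\<in>C. cnj (\<Sum>y<M. cnj (a \<pi> y) * v y) * (\<Sum>y<M. cnj (a \<pi> y) * v y))"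
      unfolding Q_def qform_diff qform_id qform_proj ..
    then have "Re (qform M Q v) = L * (\<Sum>x<M. (cmod (v x))^2)
        - (\<Sum>\<pi>\<in>C. (cmod (\<Sum>y<M. cnj (a \<pi> y) * v y))^2)"
    proof -
      have r: "Re (complex_of_real L * z) = L * Re z" for z by simp
      show ?thesis unfolding \<open>qform M Q v = _\<close> minus_complex.sel r Re_sum_cnj ..
    qed
    moreover have "(\<Sum>\<pi>\<in>C. (cmod (\<Sum>y<M. cnj (a \<pi> y) * v y))^2) \<le> L * (\<Sum>x<M. (cmod (v x))^2)"
      unfolding L_def N_def by (rule schur[OF fin b diag off])
    ultimately show "0 \<le> Re (qform M Q v)" by simp
  qed
  have hermr: "herm M \<rho>" 
    using dm unfolding density_matrix_def herm_def M_def by blast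
  have psdr: "psd M \<rho>"
    using dm unfolding density_matrix_def psd_def qform_def M_def by blast
  have tr: "(\<Sum>x<M. \<rho> x x) = 1"
    using dm unfolding density_matrix_def M_def by blast
  have "0 \<le> Re (trp M \<rho> Q)" by (rule psd_trace[OF hermr psdr psdQ])
  also have "trp M \<rho> Q = complex_of_real L - (\<Sum>\<pi>\<in>C. expval m \<rho> \<pi>)"
    unfolding Q_def trp_diff trp_id trp_proj tr unfolding expval_def M_def a_def by simp
  finally have "(\<Sum>\<pi>\<in>C. Re (expval m \<rho> \<pi>)) \<le> L" by (simp add: Re_sum)
  moreover have "(\<Sum>\<pi>\<in>C. \<eta> - \<epsilon>) \<le> (\<Sum>\<pi>\<in>C. Re (expval m \<rho> \<pi>))"
    by (rule sum_mono) (use ev in auto)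
  ultimately have "real N * (\<eta> - \<epsilon>) \<le> 1 + real N / b" unfolding N_def L_def by simp
  then have "real N * (\<eta> - \<epsilon> - 1 / b) \<le> 1" by (simp add: algebra_simps)
  then show ?thesis unfolding N_def using pos by (simp add: pos_le_divide_eq)
qed


end
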